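(* Let $\mathsf{SUPERINV}$ be the verification condition provider given by $\mathsf{SUPERINV}(\mathtt{while}(\varphi)\{C_{\mathrm{body}}\}[I],f)=\mathsf{true}$ iff $[\varphi]\cdot\mathrm{dwp}^*[\![C_{\mathrm{body}}]\!](I)+[\neg\varphi]\cdot f\le I$. Then $\mathsf{SUPERINV}$ yields upper bounds for $\mathrm{dwp}$, and $\mathrm{trans}^{\preceq}_{\mathrm{dwp}}$ preserves $\mathsf{SUPERINV}$.
   Context: States: fix a countably infinite set of program variables with values in $\mathbb{Q}_{\ge 0}$; a state is a map $\sigma$ from variables to $\mathbb{Q}_{\ge0}$ which is $0$ for all but finitely many variables; $\mathsf{States}$ is the set of states. A predicate is a map $\varphi:\mathsf{States}\to\{\mathsf{true},\mathsf{false}\}$; $\varphi\models\psi$ means every state satisfying $\varphi$ satisfies $\psi$; $\models\varphi$ means $\varphi$ holds in every state; $\varphi\Rightarrow\psi$ is the usual implication. Expectations: $\mathbb{E}$ is the set of maps $\mathsf{States}\to[0,\infty]$, ordered pointwise; $+,\cdot$ pointwise with $0\cdot\infty=0$; $\sqcap$ pointwise min; $[\varphi]$ Iverson bracket; $(\varphi\to g)(\sigma)=g(\sigma)$ if $\sigma\models\varphi$, else $\infty$; $f[x/E](\sigma)=f(\sigma[x\mapsto E(\sigma)])$. Programs of $\mathsf{pGCL}$: $C ::= \mathtt{skip} \mid x:=E \mid C;C \mid \mathtt{if}\ \varphi_1\to C\ \square\ \varphi_2\to C \mid \{C\}[p]\{C\} \mid \mathtt{while}(\varphi)\{C\}[I]$,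 where $E:\mathsf{States}\to\mathbb{Q}_{\ge0}$, $p:\mathsf{States}\to[0,1]$, in every guarded choice $\varphi_1\vee\varphi_2$ is valid, and every loop carries an invariant annotation $I\in\mathbb{E}$. Demonic weakest preexpectation: $\mathrm{dwp}[\![\mathtt{skip}]\!](f)=f$; $\mathrm{dwp}[\![x:=E]\!](f)=f[x/E]$; $\mathrm{dwp}[\![C_1;C_2]\!](f)=\mathrm{dwp}[\![C_1]\!](\mathrm{dwp}[\![C_2]\!](f))$; $\mathrm{dwp}[\![\mathtt{if}\ \varphi_1\to C_1\ \square\ \varphi_2\to C_2]\!](f)=(\varphi_1\to\mathrm{dwp}[\![C_1]\!](f))\sqcap(\varphi_2\to\mathrm{dwp}[\![C_2]\!](f))$; $\mathrm{dwp}[\![\{C_1\}[p]\{C_2\}]\!](f)=p\cdot\mathrm{dwp}[\![C_1]\!](f)+(1-p)\cdot\mathrm{dwp}[\![C_2]\!](f)$; loops: least fixpoint of $g\mapsto[\neg\varphi]\cdot f+[\varphi]\cdot\mathrm{dwp}[\![C']\!](g)$. The auxiliary $\mathrm{dwp}^*$ follows the same rules except $\mathrm{dwp}^*[\![\mathtt{while}(\varphi)\{C'\}[I]]\!](f)=I$. Implementation relation $\multimap$: smallest partial order on $\mathsf{pGCL}$ closed under: if $C_1'\multimap C_1$, $C_2'\multimap C_2$ then $C_1';C_2'\multimap C_1;C_2$ and $\{C_1'\}[p]\{C_2'\}\multimap\{C_1\}[p]\{C_2\}$; if moreover $\varphi_1'\models\varphi_1$, $\varphi_2'\models\varphi_2$,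 $\models\varphi_1'\vee\varphi_2'$ then $\mathtt{if}\ \varphi_1'\to C_1'\ \square\ \varphi_2'\to C_2'\multimap\mathtt{if}\ \varphi_1\to C_1\ \square\ \varphi_2\to C_2$; if $C'\multimap C$ then $\mathtt{while}(\varphi)\{C'\}\multimap\mathtt{while}(\varphi)\{C\}$. Verification conditions: a provider $\mathfrak{C}$ maps annotated loops and $f\in\mathbb{E}$ to truth values; $\mathrm{vc}^{\mathfrak{C},\mathrm{dwp}}[\![C]\!](f)$: $\mathsf{true}$ for $\mathtt{skip}$ and assignments; $\mathrm{vc}[\![C_1]\!](\mathrm{dwp}^*[\![C_2]\!](f))\wedge\mathrm{vc}[\![C_2]\!](f)$ for $C_1;C_2$; $\mathrm{vc}[\![C_1]\!](f)\wedge\mathrm{vc}[\![C_2]\!](f)$ for guarded and probabilistic choices; $\mathfrak{C}(\mathtt{while}(\varphi)\{C'\}[I],f)\wedge\mathrm{vc}[\![C']\!](I)$ for loops. $\mathfrak{C}$ yields upper bounds for $\mathrm{dwp}$ if for all $C\in\mathsf{pGCL}$, $f\in\mathbb{E}$, $\mathrm{vc}^{\mathfrak{C},\mathrm{dwp}}[\![C]\!](f)$ implies $\mathrm{dwp}[\![C]\!](f)\le\mathrm{dwp}^*[\![C]\!](f)$. Transformer $\mathrm{trans}^{\preceq}_{\mathrm{dwp}}$ (with $f\preceq g$ the predicate true at $\sigma$ iff $f(\sigma)\le g(\sigma)$): $\mathtt{skip}$, assignments unchanged; $C_1;C_2\mapsto \mathrm{trans}[\![C_1]\!](\mathrm{dwp}^*[\![C_2]\!](f));\mathrm{trans}[\![C_2]\!](f)$;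 $\mathtt{if}\ \varphi_1\to C_1\ \square\ \varphi_2\to C_2\mapsto\mathtt{if}\ \psi_1\to\mathrm{trans}[\![C_1]\!](f)\ \square\ \psi_2\to\mathrm{trans}[\![C_2]\!](f)$ with $\psi_1=\varphi_1\wedge(\varphi_2\Rightarrow\mathrm{dwp}^*[\![C_1]\!](f)\preceq\mathrm{dwp}^*[\![C_2]\!](f))$, $\psi_2=\varphi_2\wedge(\varphi_1\Rightarrow\mathrm{dwp}^*[\![C_2]\!](f)\preceq\mathrm{dwp}^*[\![C_1]\!](f))$; probabilistic choice transformed branchwise; $\mathtt{while}(\varphi)\{C'\}[I]\mapsto\mathtt{while}(\varphi)\{\mathrm{trans}[\![C']\!](I)\}[I]$. $\mathrm{trans}^{\preceq}_{\mathrm{dwp}}$ preserves $\mathfrak{C}$ if for all $C,C'$, $f$: $\mathrm{vc}^{\mathfrak{C},\mathrm{dwp}}[\![C]\!](f)$ and $C'\multimap\mathrm{trans}^{\preceq}_{\mathrm{dwp}}[\![C]\!](f)$ imply $\mathrm{vc}^{\mathfrak{C},\mathrm{dwp}}[\![C']\!](f)$. *)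

theory Defs
  imports Complex_Main "HOL-Library.Extended_Nonnegative_Real"
begin

typedef state = "{\<sigma> :: nat \<Rightarrow> rat. (\<forall>x. 0 \<le> \<sigma> x) \<and> finite {x. \<sigma> x \<noteq> 0}}"
  by (rule exI[of _ "\<lambda>_. 0"]) simp

type_synonym pred = "state \<Rightarrow> bool"
type_synonym expect = "state \<Rightarrow> ennreal"

text \<open>State update sigma[x := q]. (Only used with q \<ge> 0, guaranteed by well-formedness.)\<close>
definition upd :: "state \<Rightarrow> nat \<Rightarrow> rat \<Rightarrow> state" where
  "upd \<sigma> x q = Abs_state ((Rep_state \<sigma>)(x := q))"

datatype pgcl =
    Skip
  | Assign nat "state \<Rightarrow> rat"
  | Seq pgcl pgcl
  | GIf pred pgcl pred pgcl
  | Prob pgcl "state \<Rightarrow> real" pgcl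
  | While pred pgcl expect

fun wf :: "pgcl \<Rightarrow> bool" where
  "wf Skip = True"
| "wf (Assign x E) = (\<forall>\<sigma>. 0 \<le> E \<sigma>)"
| "wf (Seq C1 C2) = (wf C1 \<and> wf C2)"
| "wf (GIf \<phi>1 C1 \<phi>2 C2) = ((\<forall>\<sigma>. \<phi>1 \<sigma> \<or> \<phi>2 \<sigma>) \<and> wf C1 \<and> wf C2)"
| "wf (Prob C1 p C2) = ((\<forall>\<sigma>. 0 \<le> p \<sigma> \<and> p \<sigma> \<le> 1) \<and> wf C1 \<and> wf C2)"
| "wf (While \<phi> C I) = wf C"

definition iv :: "pred \<Rightarrow> expect" where
  "iv \<phi> \<sigma> = (if \<phi> \<sigma> then 1 else 0)"

definition guardto :: "pred \<Rightarrow> expect \<Rightarrow> expect" where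
  "guardto \<phi> g \<sigma> = (if \<phi> \<sigma> then g \<sigma> else \<infinity>)"

definition subst :: "expect \<Rightarrow> nat \<Rightarrow> (state \<Rightarrow> rat) \<Rightarrow> expect" where
  "subst f x E \<sigma> = f (upd \<sigma> x (E \<sigma>))"

definition pmix :: "(state \<Rightarrow> real) \<Rightarrow> expect \<Rightarrow> expect \<Rightarrow> expect" where
  "pmix p g h \<sigma> = ennreal (p \<sigma>) * g \<sigma> + ennreal (1 - p \<sigma>) * h \<sigma>"

definition lepred :: "expect \<Rightarrow> expect \<Rightarrow> pred" where
  "lepred f g \<sigma> = (f \<sigma> \<le> g \<sigma>)"

primrec dwp :: "pgcl \<Rightarrow> expect \<Rightarrow> expect" where
  "dwp Skip f = f"
| "dwp (Assign x E) f = subst f x E"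
| "dwp (Seq C1 C2) f = dwp C1 (dwp C2 f)"
| "dwp (GIf \<phi>1 C1 \<phi>2 C2) f = (\<lambda>\<sigma>. min (guardto \<phi>1 (dwp C1 f) \<sigma>) (guardto \<phi>2 (dwp C2 f) \<sigma>))"
| "dwp (Prob C1 p C2) f = pmix p (dwp C1 f) (dwp C2 f)"
| "dwp (While \<phi> C I) f =
     lfp (\<lambda>g \<sigma>. iv (\<lambda>s. \<not> \<phi> s) \<sigma> * f \<sigma> + iv \<phi> \<sigma> * dwp C g \<sigma>)"

primrec dwps :: "pgcl \<Rightarrow> expect \<Rightarrow> expect" where
  "dwps Skip f = f"
| "dwps (Assign x E) f = subst f x E"
| "dwps (Seq C1 C2) f = dwps C1 (dwps C2 f)"
| "dwps (GIf \<phi>1 C1 \<phi>2 C2) f = (\<lambda>\<sigma>. min (guardto \<phi>1 (dwps C1 f) \<sigma>) (guardto \<phi>2 (dwps C2 f) \<sigma>))"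
| "dwps (Prob C1 p C2) f = pmix p (dwps C1 f) (dwps C2 f)"
| "dwps (While \<phi> C I) f = I"

inductive impl :: "pgcl \<Rightarrow> pgcl \<Rightarrow> bool" where
  impl_refl: "impl C C"
| impl_trans: "impl C1 C2 \<Longrightarrow> impl C2 C3 \<Longrightarrow> impl C1 C3"
| impl_seq: "impl C1' C1 \<Longrightarrow> impl C2' C2 \<Longrightarrow> impl (Seq C1' C2') (Seq C1 C2)"
| impl_prob: "impl C1' C1 \<Longrightarrow> impl C2' C2 \<Longrightarrow> impl (Prob C1' p C2') (Prob C1 p C2)"
| impl_if: "impl C1' C1 \<Longrightarrow> impl C2' C2 \<Longrightarrow>
     (\<forall>\<sigma>. \<phi>1' \<sigma> \<longrightarrow> \<phi>1 \<sigma>) \<Longrightarrow> (\<forall>\<sigma>. \<phi>2' \<sigma> \<longrightarrow> \<phi>2 \<sigma>) \<Longrightarrow>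
     (\<forall>\<sigma>. \<phi>1' \<sigma> \<or> \<phi>2' \<sigma>) \<Longrightarrow>
     impl (GIf \<phi>1' C1' \<phi>2' C2') (GIf \<phi>1 C1 \<phi>2 C2)"
| impl_while: "impl C' C \<Longrightarrow> impl (While \<phi> C' I) (While \<phi> C I)"

type_synonym provider = "pgcl \<Rightarrow> expect \<Rightarrow> bool"

primrec vc :: "provider \<Rightarrow> pgcl \<Rightarrow> expect \<Rightarrow> bool" where
  "vc P Skip f = True"
| "vc P (Assign x E) f = True"
| "vc P (Seq C1 C2) f = (vc P C1 (dwps C2 f) \<and> vc P C2 f)"
| "vc P (GIf \<phi>1 C1 \<phi>2 C2) f = (vc P C1 f \<and> vc P C2 f)"
| "vc P (Prob C1 p C2) f = (vc P C1 f \<and> vc P C2 f)"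
| "vc P (While \<phi> C I) f = (P (While \<phi> C I) f \<and> vc P C I)"

definition yields_upper_bounds :: "provider \<Rightarrow> bool" where
  "yields_upper_bounds P = (\<forall>C f. wf C \<longrightarrow> vc P C f \<longrightarrow> dwp C f \<le> dwps C f)"

primrec trans_dwp :: "pgcl \<Rightarrow> expect \<Rightarrow> pgcl" where
  "trans_dwp Skip f = Skip"
| "trans_dwp (Assign x E) f = Assign x E"
| "trans_dwp (Seq C1 C2) f = Seq (trans_dwp C1 (dwps C2 f)) (trans_dwp C2 f)"
| "trans_dwp (GIf \<phi>1 C1 \<phi>2 C2) f =
     GIf (\<lambda>\<sigma>. \<phi>1 \<sigma> \<and> (\<phi>2 \<sigma> \<longrightarrow> lepred (dwps C1 f) (dwps C2 f) \<sigma>)) (trans_dwp C1 f)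
         (\<lambda>\<sigma>. \<phi>2 \<sigma> \<and> (\<phi>1 \<sigma> \<longrightarrow> lepred (dwps C2 f) (dwps C1 f) \<sigma>)) (trans_dwp C2 f)"
| "trans_dwp (Prob C1 p C2) f = Prob (trans_dwp C1 f) p (trans_dwp C2 f)"
| "trans_dwp (While \<phi> C I) f = While \<phi> (trans_dwp C I) I"

definition trans_preserves :: "provider \<Rightarrow> bool" where
  "trans_preserves P = (\<forall>C C' f. wf C \<longrightarrow> wf C' \<longrightarrow> vc P C f \<longrightarrow>
       impl C' (trans_dwp C f) \<longrightarrow> vc P C' f)"

text \<open>The provider is only ever consulted on loops; on other programs it is irrelevant.\<close>
fun superinv :: provider where
  "superinv (While \<phi> C I) f =
     ((\<lambda>\<sigma>. iv \<phi> \<sigma> * dwps C I \<sigma> + iv (\<lambda>s. \<not> \<phi> s) \<sigma> * f \<sigma>) \<le> I)"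
| "superinv _ f = True"

end

theory Submission
  imports Defs
begin

lemma dwp_mono: "f \<le> g \<Longrightarrow> dwp C f \<le> dwp C g"
proof (induction C arbitrary: f g)
  case Skip then show ?case by simp
next
  case (Assign x E) then show ?case by (simp add: le_fun_def subst_def)
next
  case (Seq C1 C2) then show ?case by simp
next
  case (GIf p1 C1 p2 C2)
  have a: "dwp C1 f \<le> dwp C1 g" "dwp C2 f \<le> dwp C2 g" using GIf by auto
  show ?case
  proof (rule le_funI)
    fix s
    have "guardto p1 (dwp C1 f) s \<le> guardto p1 (dwp C1 g) s"
         "guardto p2 (dwp C2 f) s \<le> guardto p2 (dwp C2 g) s"
      using a by (auto simp: guardto_def le_fun_def)
    then show "dwp (GIf p1 C1 p2 C2) f s \<le> dwp (GIf p1 C1 p2 C2) g s"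
      unfolding dwp.simps by (rule min.mono)
  qed
next
  case (Prob C1 p C2)
  have a: "dwp C1 f \<le> dwp C1 g" "dwp C2 f \<le> dwp C2 g" using Prob by auto
  show ?case using a
    by (auto simp: pmix_def le_fun_def intro!: add_mono mult_left_mono)
next
  case (While \<phi> C I)
  show ?case
    unfolding dwp.simps
  proof (rule lfp_mono)
    fix Z
    show "(\<lambda>\<sigma>. iv (\<lambda>s. \<not> \<phi> s) \<sigma> * f \<sigma> + iv \<phi> \<sigma> * dwp C Z \<sigma>)
       \<le> (\<lambda>\<sigma>. iv (\<lambda>s. \<not> \<phi> s) \<sigma> * g \<sigma> + iv \<phi> \<sigma> * dwp C Z \<sigma>)"
      using While.prems by (auto simp: le_fun_def intro!: add_mono mult_left_mono)
  qed
qed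

lemma ub: "vc superinv C f \<Longrightarrow> dwp C f \<le> dwps C f"
proof (induction C arbitrary: f)
  case Skip then show ?case by simp
next
  case (Assign x E) then show ?case by simp
next
  case (Seq C1 C2)
  have "dwp C1 (dwp C2 f) \<le> dwp C1 (dwps C2 f)"
    using Seq by (intro dwp_mono) auto
  also have "\<dots> \<le> dwps C1 (dwps C2 f)" using Seq by auto
  finally show ?case by simp
next
  case (GIf p1 C1 p2 C2)
  have a: "dwp C1 f \<le> dwps C1 f" "dwp C2 f \<le> dwps C2 f" using GIf by auto
  show ?case
  proof (rule le_funI)
    fix s
    have "guardto p1 (dwp C1 f) s \<le> guardto p1 (dwps C1 f) s"
         "guardto p2 (dwp C2 f) s \<le> guardto p2 (dwps C2 f) s"
      using a by (auto simp: guardto_def le_fun_def)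
    then show "dwp (GIf p1 C1 p2 C2) f s \<le> dwps (GIf p1 C1 p2 C2) f s"
      unfolding dwp.simps dwps.simps by (rule min.mono)
  qed
next
  case (Prob C1 p C2)
  have a: "dwp C1 f \<le> dwps C1 f" "dwp C2 f \<le> dwps C2 f" using Prob by auto
  show ?case using a
    by (auto simp: pmix_def le_fun_def intro!: add_mono mult_left_mono)
next
  case (While \<phi> C I)
  have si: "(\<lambda>\<sigma>. iv \<phi> \<sigma> * dwps C I \<sigma> + iv (\<lambda>s. \<not> \<phi> s) \<sigma> * f \<sigma>) \<le> I"
    and ih: "dwp C I \<le> dwps C I" using While by auto
  show ?case
    unfolding dwp.simps dwps.simps
  proof (rule lfp_lowerbound, rule le_funI)
    fix s
    have "iv (\<lambda>s. \<not> \<phi> s) s * f s + iv \<phi> s * dwp C I s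
        \<le> iv \<phi> s * dwps C I s + iv (\<lambda>s. \<not> \<phi> s) s * f s"
      using ih by (subst add.commute) (auto simp: le_fun_def intro!: add_mono mult_left_mono)
    also have "\<dots> \<le> I s" using si by (auto simp: le_fun_def)
    finally show "iv (\<lambda>s. \<not> \<phi> s) s * f s + iv \<phi> s * dwp C I s \<le> I s" .
  qed
qed

lemma inv_skip: "impl X Y \<Longrightarrow> Y = Skip \<Longrightarrow> X = Skip"
  by (induction rule: impl.induct) auto

lemma inv_assign: "impl X Y \<Longrightarrow> Y = Assign x E \<Longrightarrow> X = Assign x E"
  by (induction arbitrary: x E rule: impl.induct) auto

lemma inv_seq: "impl X Y \<Longrightarrow> Y = Seq A B \<Longrightarrow> (\<exists>A' B'. X = Seq A' B' \<and> impl A' A \<and> impl B' B)"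
proof (induction arbitrary: A B rule: impl.induct)
  case (impl_trans C1 C2 C3)
  then obtain A2 B2 where h: "C2 = Seq A2 B2" "impl A2 A" "impl B2 B" by blast
  then obtain A1 B1 where "C1 = Seq A1 B1" "impl A1 A2" "impl B1 B2" using impl_trans.IH(1) by blast
  with h show ?case using impl.impl_trans by blast
qed (auto intro: impl.impl_refl)

lemma inv_prob: "impl X Y \<Longrightarrow> Y = Prob A p B \<Longrightarrow> (\<exists>A' B'. X = Prob A' p B' \<and> impl A' A \<and> impl B' B)"
proof (induction arbitrary: A B rule: impl.induct)
  case (impl_trans C1 C2 C3)
  then obtain A2 B2 where h: "C2 = Prob A2 p B2" "impl A2 A" "impl B2 B" by blast
  then obtain A1 B1 where "C1 = Prob A1 p B1" "impl A1 A2" "impl B1 B2" using impl_trans.IH(1) by blast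
  with h show ?case using impl.impl_trans by blast
qed (auto intro: impl.impl_refl)

lemma inv_while: "impl X Y \<Longrightarrow> Y = While \<phi> B I \<Longrightarrow> (\<exists>B'. X = While \<phi> B' I \<and> impl B' B)"
proof (induction arbitrary: B rule: impl.induct)
  case (impl_trans C1 C2 C3)
  then obtain B2 where h: "C2 = While \<phi> B2 I" "impl B2 B" by blast
  then obtain B1 where "C1 = While \<phi> B1 I" "impl B1 B2" using impl_trans.IH(1) by blast
  with h show ?case using impl.impl_trans by blast
qed (auto intro: impl.impl_refl)

lemma inv_gif: "impl X Y \<Longrightarrow> Y = GIf p1 A p2 B \<Longrightarrow> (\<exists>p1' A' p2' B'. X = GIf p1' A' p2' B' \<and> impl A' A \<and> impl B' B
     \<and> (\<forall>\<sigma>. p1' \<sigma> \<longrightarrow> p1 \<sigma>) \<and> (\<forall>\<sigma>. p2' \<sigma> \<longrightarrow> p2 \<sigma>))"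
proof (induction arbitrary: p1 A p2 B rule: impl.induct)
  case (impl_trans C1 C2 C3)
  then obtain q1 A2 q2 B2 where h: "C2 = GIf q1 A2 q2 B2" "impl A2 A" "impl B2 B"
    "\<forall>\<sigma>. q1 \<sigma> \<longrightarrow> p1 \<sigma>" "\<forall>\<sigma>. q2 \<sigma> \<longrightarrow> p2 \<sigma>" by blast
  then obtain r1 A1 r2 B1 where h2: "C1 = GIf r1 A1 r2 B1" "impl A1 A2" "impl B1 B2"
    "\<forall>\<sigma>. r1 \<sigma> \<longrightarrow> q1 \<sigma>" "\<forall>\<sigma>. r2 \<sigma> \<longrightarrow> q2 \<sigma>" using impl_trans.IH(1) by blast
  have "impl A1 A" "impl B1 B" using h h2 impl.impl_trans by blast+
  with h h2 show ?case by blast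
qed (auto intro: impl.impl_refl)


lemma dwps_eq: "wf C' \<Longrightarrow> impl C' (trans_dwp C f) \<Longrightarrow> dwps C' f = dwps C f"
proof (induction C arbitrary: C' f)
  case Skip then show ?case using inv_skip by fastforce
next
  case (Assign x E) then show ?case using inv_assign by fastforce
next
  case (Seq C1 C2)
  then obtain A' B' where "C' = Seq A' B'" "impl A' (trans_dwp C1 (dwps C2 f))"
    "impl B' (trans_dwp C2 f)" using inv_seq[OF Seq.prems(2)] by auto
  then show ?case using Seq by auto
next
  case (Prob C1 p C2)
  then obtain A' B' where "C' = Prob A' p B'" "impl A' (trans_dwp C1 f)"
    "impl B' (trans_dwp C2 f)" using inv_prob[OF Prob.prems(2)] by auto
  then show ?case using Prob by auto
next
  case (While \<phi> B I)
  then show ?case using inv_while[OF While.prems(2)] by auto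
next
  case (GIf p1 C1 p2 C2)
  obtain q1 A' q2 B' where C': "C' = GIf q1 A' q2 B'" and i: "impl A' (trans_dwp C1 f)"
    "impl B' (trans_dwp C2 f)"
    and g1: "\<forall>\<sigma>. q1 \<sigma> \<longrightarrow> p1 \<sigma> \<and> (p2 \<sigma> \<longrightarrow> lepred (dwps C1 f) (dwps C2 f) \<sigma>)"
    and g2: "\<forall>\<sigma>. q2 \<sigma> \<longrightarrow> p2 \<sigma> \<and> (p1 \<sigma> \<longrightarrow> lepred (dwps C2 f) (dwps C1 f) \<sigma>)"
    using inv_gif[OF GIf.prems(2)] by auto
  have cov: "\<forall>\<sigma>. q1 \<sigma> \<or> q2 \<sigma>" and w: "wf A'" "wf B'" using GIf.prems(1) C' by auto
  have e: "dwps A' f = dwps C1 f" "dwps B' f = dwps C2 f" using GIf.IH w i by auto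
  show ?case
  proof
    fix s
    show "dwps C' f s = dwps (GIf p1 C1 p2 C2) f s"
      using cov[rule_format, of s] g1[rule_format, of s] g2[rule_format, of s]
      unfolding C' dwps.simps e
      by (auto simp: guardto_def lepred_def min_def top_unique)
  qed
qed

lemma vc_pres: "wf C' \<Longrightarrow> vc superinv C f \<Longrightarrow> impl C' (trans_dwp C f) \<Longrightarrow> vc superinv C' f"
proof (induction C arbitrary: C' f)
  case Skip then show ?case using inv_skip by fastforce
next
  case (Assign x E) then show ?case using inv_assign by fastforce
next
  case (Seq C1 C2)
  then obtain A' B' where "C' = Seq A' B'" "impl A' (trans_dwp C1 (dwps C2 f))"
    "impl B' (trans_dwp C2 f)" using inv_seq[OF Seq.prems(3)] by auto
  then show ?case using Seq dwps_eq by auto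
next
  case (Prob C1 p C2)
  then obtain A' B' where "C' = Prob A' p B'" "impl A' (trans_dwp C1 f)"
    "impl B' (trans_dwp C2 f)" using inv_prob[OF Prob.prems(3)] by auto
  then show ?case using Prob by auto
next
  case (GIf p1 C1 p2 C2)
  then obtain q1 A' q2 B' where "C' = GIf q1 A' q2 B'" "impl A' (trans_dwp C1 f)"
    "impl B' (trans_dwp C2 f)" using inv_gif[OF GIf.prems(3)] by fastforce
  then show ?case using GIf by auto
next
  case (While \<phi> B I)
  then obtain B' where "C' = While \<phi> B' I" "impl B' (trans_dwp B I)"
    using inv_while[OF While.prems(3)] by auto
  then show ?case using While dwps_eq[of B' B I] by auto
qed

theorem theorem6p8:
  shows "yields_upper_bounds superinv \<and> trans_preserves superinv"
  unfolding yields_upper_bounds_def trans_preserves_def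
  using ub vc_pres by blast

end
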